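(* (1) $\mathrm{Pr}(\mathrm{Fig}(T^\phi)\setminus\{T\})=m_T\setminus(\mathcal S_1\cup\{T^\phi\})$. (2) $\mathrm{Pr}(\mathrm{Fig}(T^{\phi^2})\setminus\{T\})=m_T\setminus(\mathcal S_1\cup\{T^{\phi^2}\})$.
   Context: Let $q$ be a prime power, $\mathbb{F}_{q^3}^*=\mathbb{F}_{q^3}\setminus\{0\}$. Points of $\mathrm{PG}(2,q^3)$ have homogeneous coordinates $(x,y,z)$ and lines $[a,b,c]$. Let $\phi$ be the collineation $(x,y,z)\mapsto(z^q,x^q,y^q)$ (on lines $[d,e,f]\mapsto[f^q,d^q,e^q]$). A point has Type II (resp. III) if its $\phi$-orbit is three collinear (resp. non-collinear) points; a line has Type III if its $\phi$-orbit is three non-concurrent lines. For a Type III point $X$, the Fig-block is $\mathrm{Fig}(X)=\mathcal E_X\cup\mathcal F_X$, where $\mathcal E_X$ is the set of Type II points on the line $X^\phi X^{\phi^2}$ and $\mathcal F_X=\{\ell^\phi\cap\ell^{\phi^2}:\ell\text{ a Type III line through }X\}$. Let $T=(0,0,1)$, $T^\phi=(1,0,0)$, $T^{\phi^2}=(0,1,0)$ (all Type III), and $m_T=T^\phi T^{\phi^2}$ the line $[0,0,1]$. For a point $P\neq T$, $\mathrm{Pr}(P)=TP\cap m_T$, applied elementwise to sets of points not containing $T$. Let $\mathcal S_1=\{(x,x^q,0):x\in\mathbb{F}_{q^3}^*\}\subset m_T$. *)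

theory Defs
  imports Main "HOL-Number_Theory.Prime_Powers"
begin

text \<open>Vectors are triples; a point
(and, dually, a line) is the class of all nonzero scalar multiples of a nonzero
triple.\<close>

type_synonym 'a vec3 = "'a \<times> 'a \<times> 'a"

definition smult3 :: "'a::field \<Rightarrow> 'a vec3 \<Rightarrow> 'a vec3" where
  "smult3 c v = (case v of (x, y, z) \<Rightarrow> (c * x, c * y, c * z))"

definition proj :: "'a::field vec3 \<Rightarrow> 'a vec3 set" where
  "proj v = {smult3 c v | c. c \<noteq> 0}"

definition pg_points :: "'a::field vec3 set set" where
  "pg_points = {proj v | v. v \<noteq> (0, 0, 0)}"

text \<open>Lines are represented by the same kind of classes (dual coordinates).\<close>
abbreviation pg_lines :: "'a::field vec3 set set" where
  "pg_lines \<equiv> pg_points"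

definition dot3 :: "'a::field vec3 \<Rightarrow> 'a vec3 \<Rightarrow> 'a" where
  "dot3 v w = (case v of (x, y, z) \<Rightarrow> case w of (a, b, c) \<Rightarrow> a * x + b * y + c * z)"

definition incident :: "'a::field vec3 set \<Rightarrow> 'a vec3 set \<Rightarrow> bool" where
  "incident P L \<longleftrightarrow> (\<exists>v\<in>P. \<exists>w\<in>L. dot3 v w = 0)"

definition join :: "'a::field vec3 set \<Rightarrow> 'a vec3 set \<Rightarrow> 'a vec3 set" where
  "join P Q = (THE L. L \<in> pg_lines \<and> incident P L \<and> incident Q L)"

definition meet :: "'a::field vec3 set \<Rightarrow> 'a vec3 set \<Rightarrow> 'a vec3 set" where
  "meet L M = (THE P. P \<in> pg_points \<and> incident P L \<and> incident P M)"

definition collinear3 :: "'a::field vec3 set \<Rightarrow> 'a vec3 set \<Rightarrow> 'a vec3 set \<Rightarrow> bool" where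
  "collinear3 P Q R \<longleftrightarrow> (\<exists>L\<in>pg_lines. incident P L \<and> incident Q L \<and> incident R L)"

definition concurrent3 :: "'a::field vec3 set \<Rightarrow> 'a vec3 set \<Rightarrow> 'a vec3 set \<Rightarrow> bool" where
  "concurrent3 L M N \<longleftrightarrow> (\<exists>P\<in>pg_points. incident P L \<and> incident P M \<and> incident P N)"

text \<open>The collineation phi: (x,y,z) \<mapsto> (z^q, x^q, y^q); on lines
[d,e,f] \<mapsto> [f^q, d^q, e^q] (same formula). It acts on classes by image.\<close>

definition phiv :: "nat \<Rightarrow> 'a::field vec3 \<Rightarrow> 'a vec3" where
  "phiv q v = (case v of (x, y, z) \<Rightarrow> (z ^ q, x ^ q, y ^ q))"

definition phi :: "nat \<Rightarrow> 'a::field vec3 set \<Rightarrow> 'a vec3 set" where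
  "phi q P = phiv q ` P"

definition typeII :: "nat \<Rightarrow> 'a::field vec3 set \<Rightarrow> bool" where
  "typeII q P \<longleftrightarrow> P \<in> pg_points \<and> P \<noteq> phi q P \<and> P \<noteq> phi q (phi q P) \<and>
     phi q P \<noteq> phi q (phi q P) \<and> collinear3 P (phi q P) (phi q (phi q P))"

definition typeIII :: "nat \<Rightarrow> 'a::field vec3 set \<Rightarrow> bool" where
  "typeIII q P \<longleftrightarrow> P \<in> pg_points \<and> P \<noteq> phi q P \<and> P \<noteq> phi q (phi q P) \<and>
     phi q P \<noteq> phi q (phi q P) \<and> \<not> collinear3 P (phi q P) (phi q (phi q P))"

definition typeIII_line :: "nat \<Rightarrow> 'a::field vec3 set \<Rightarrow> bool" where
  "typeIII_line q L \<longleftrightarrow> L \<in> pg_lines \<and> L \<noteq> phi q L \<and> L \<noteq> phi q (phi q L) \<and>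
     phi q L \<noteq> phi q (phi q L) \<and> \<not> concurrent3 L (phi q L) (phi q (phi q L))"

definition figE :: "nat \<Rightarrow> 'a::field vec3 set \<Rightarrow> 'a vec3 set set" where
  "figE q X = {P. typeII q P \<and> incident P (join (phi q X) (phi q (phi q X)))}"

definition figF :: "nat \<Rightarrow> 'a::field vec3 set \<Rightarrow> 'a vec3 set set" where
  "figF q X = {meet (phi q l) (phi q (phi q l)) | l. typeIII_line q l \<and> incident X l}"

definition Fig :: "nat \<Rightarrow> 'a::field vec3 set \<Rightarrow> 'a vec3 set set" where
  "Fig q X = figE q X \<union> figF q X"

definition ptT :: "'a::field vec3 set" where
  "ptT = proj (0, 0, 1)"

definition lineMT :: "'a::field vec3 set" where
  "lineMT = proj (0, 0, 1)"

definition Pr :: "'a::field vec3 set \<Rightarrow> 'a vec3 set" where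
  "Pr P = meet (join ptT P) lineMT"

definition S1 :: "nat \<Rightarrow> 'a::field vec3 set set" where
  "S1 q = {proj (x, x ^ q, 0) | x. x \<noteq> 0}"

definition points_on :: "'a::field vec3 set \<Rightarrow> 'a vec3 set set" where
  "points_on L = {P \<in> pg_points. incident P L}"

end

theory Submission
  imports Defs "HOL-Computational_Algebra.Polynomial"
begin


definition cross3 :: "'a::field vec3 \<Rightarrow> 'a vec3 \<Rightarrow> 'a vec3" where
  "cross3 u v = (case u of (u1,u2,u3) \<Rightarrow> case v of (v1,v2,v3) \<Rightarrow>
     (u2*v3 - u3*v2, u3*v1 - u1*v3, u1*v2 - u2*v1))"

lemma smult3_simp[simp]: "smult3 c (x,y,z) = (c*x, c*y, c*z)"
  by (simp add: smult3_def)

lemma dot3_simp[simp]: "dot3 (x,y,z) (a,b,c) = a*x + b*y + c*z"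
  by (simp add: dot3_def)

lemma cross3_simp[simp]: "cross3 (u1,u2,u3) (v1,v2,v3) = (u2*v3 - u3*v2, u3*v1 - u1*v3, u1*v2 - u2*v1)"
  by (simp add: cross3_def)

lemma phiv_simp[simp]: "phiv q (x,y,z) = (z^q, x^q, y^q)"
  by (simp add: phiv_def)

lemma proj_eqI: "(c::'a::field) \<noteq> 0 \<Longrightarrow> w = smult3 c v \<Longrightarrow> proj w = proj v"
proof -
  assume c: "c \<noteq> 0" and w: "w = smult3 c v"
  obtain x y z where v: "v = (x,y,z)" by (cases v) auto
  show ?thesis
  proof (rule set_eqI, rule iffI)
    fix p assume "p \<in> proj w"
    then obtain d where "d \<noteq> 0" "p = smult3 d w" by (auto simp: proj_def)
    then show "p \<in> proj v" using c unfolding proj_def w v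
      by (intro CollectI exI[of _ "d*c"]) (auto simp: mult.assoc)
  next
    fix p assume "p \<in> proj v"
    then obtain d where "d \<noteq> 0" "p = smult3 d v" by (auto simp: proj_def)
    then show "p \<in> proj w" using c unfolding proj_def w v
      by (intro CollectI exI[of _ "d/c"]) auto
  qed
qed

lemma self_in_proj: "v \<in> proj v"
  unfolding proj_def by (rule CollectI, rule exI[of _ 1]) (cases v, auto)

lemma proj_eqD: "proj v = proj w \<Longrightarrow> \<exists>c::'a::field. c \<noteq> 0 \<and> w = smult3 c v"
proof -
  assume "proj v = proj w"
  then have "w \<in> proj v" using self_in_proj by metis
  then show ?thesis by (auto simp: proj_def)
qed

lemma proj_eq_iff: "proj v = proj w \<longleftrightarrow> (\<exists>c::'a::field. c \<noteq> 0 \<and> w = smult3 c v)"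
  using proj_eqD proj_eqI by metis

lemma proj_in_pg: "v \<noteq> (0,0,0) \<Longrightarrow> proj v \<in> pg_points"
  unfolding pg_points_def by blast

lemma pgE: "P \<in> pg_points \<Longrightarrow> (\<And>x y z. (x,y,z) \<noteq> (0,0,0) \<Longrightarrow> P = proj (x,y,z) \<Longrightarrow> thesis) \<Longrightarrow> thesis"
  unfolding pg_points_def by auto

lemma incident_proj: "incident (proj v) (proj w) \<longleftrightarrow> dot3 v (w::'a::field vec3) = 0"
proof -
  obtain x y z where v: "v = (x,y,z)" by (cases v) auto
  obtain a b c where w: "w = (a,b,c)" by (cases w) auto
  show ?thesis
  proof
    assume "incident (proj v) (proj w)"
    then obtain d e where "d \<noteq> 0" "e \<noteq> 0" "dot3 (smult3 d v) (smult3 e w) = 0"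
      unfolding incident_def proj_def by blast
    then have "(d*e) * dot3 v w = 0" unfolding v w by (simp add: algebra_simps)
    then show "dot3 v w = 0" using \<open>d\<noteq>0\<close> \<open>e\<noteq>0\<close> by simp
  next
    assume "dot3 v w = 0"
    then show "incident (proj v) (proj w)" unfolding incident_def using self_in_proj by blast
  qed
qed

lemma parallel:
  fixes u w :: "'a::field vec3"
  assumes "cross3 u w = (0,0,0)" "w \<noteq> (0,0,0)"
  shows "\<exists>k. u = smult3 k w"
proof -
  obtain u1 u2 u3 where u: "u = (u1,u2,u3)" by (cases u) auto
  obtain w1 w2 w3 where w: "w = (w1,w2,w3)" by (cases w) auto
  have e1: "u2*w3 = u3*w2" "u3*w1 = u1*w3" "u1*w2 = u2*w1" using assms(1) unfolding u w by auto
  show ?thesis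
  proof (cases "w1 = 0")
    case False
    show ?thesis unfolding u w
      by (rule exI[of _ "u1/w1"]) (use False e1 in \<open>auto simp: field_simps\<close>)
  next
    case w1: True
    show ?thesis
    proof (cases "w2 = 0")
      case False
      show ?thesis unfolding u w
        by (rule exI[of _ "u2/w2"]) (use False w1 e1 in \<open>auto simp: field_simps\<close>)
    next
      case w2: True
      then have "w3 \<noteq> 0" using assms(2) w1 unfolding w by auto
      show ?thesis unfolding u w
        by (rule exI[of _ "u3/w3"]) (use \<open>w3\<noteq>0\<close> w1 w2 e1 in \<open>auto simp: field_simps\<close>)
    qed
  qed
qed

lemma perp_cross:
  fixes v a b :: "'a::field vec3"
  assumes "v \<noteq> (0,0,0)" "dot3 v a = 0" "dot3 v b = 0" "cross3 a b \<noteq> (0,0,0)"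
  shows "proj v = proj (cross3 a b)"
proof -
  obtain x y z where v: "v = (x,y,z)" by (cases v) auto
  obtain a1 a2 a3 where a: "a = (a1,a2,a3)" by (cases a) auto
  obtain b1 b2 b3 where b: "b = (b1,b2,b3)" by (cases b) auto
  have "cross3 v (cross3 a b) = (0,0,0)"
    using assms(2,3) unfolding v a b by (simp, algebra)
  then obtain k where k: "v = smult3 k (cross3 a b)" using parallel assms(4) by blast
  then have "k \<noteq> 0" using assms(1) by (cases "cross3 a b") auto
  then show ?thesis using k proj_eqI by metis
qed

lemma dot3_comm: "dot3 v w = dot3 w (v::'a::field vec3)"
  by (cases v; cases w) (simp add: algebra_simps)

lemma dot_cross1: "dot3 (cross3 a b) a = (0::'a::field)"
proof -
  obtain a1 a2 a3 where a: "a = (a1,a2,a3)" by (cases a) auto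
  obtain b1 b2 b3 where b: "b = (b1,b2,b3)" by (cases b) auto
  show ?thesis unfolding a b by (simp, algebra)
qed
lemma dot_cross2: "dot3 (cross3 a b) b = (0::'a::field)"
proof -
  obtain a1 a2 a3 where a: "a = (a1,a2,a3)" by (cases a) auto
  obtain b1 b2 b3 where b: "b = (b1,b2,b3)" by (cases b) auto
  show ?thesis unfolding a b by (simp, algebra)
qed

lemma meet_proj:
  fixes a b :: "'a::field vec3"
  assumes "cross3 a b \<noteq> (0,0,0)"
  shows "meet (proj a) (proj b) = proj (cross3 a b)"
  unfolding meet_def
proof (rule the_equality)
  show "proj (cross3 a b) \<in> pg_points \<and> incident (proj (cross3 a b)) (proj a) \<and> incident (proj (cross3 a b)) (proj b)"
    using assms by (simp add: proj_in_pg incident_proj dot_cross1 dot_cross2)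
next
  fix P assume "P \<in> pg_points \<and> incident P (proj a) \<and> incident P (proj b)"
  then have H: "incident P (proj a)" "incident P (proj b)" by auto
  from \<open>P \<in> pg_points \<and> _\<close> obtain x y z where P0: "(x,y,z) \<noteq> (0,0,0)" "P = proj (x,y,z)"
    by (blast elim: pgE)
  note P = P0 H[unfolded P0(2)]
  then have "dot3 (x,y,z) a = 0" "dot3 (x,y,z) b = 0" by (simp_all only: incident_proj)
  then show "P = proj (cross3 a b)" using P(1,2) assms perp_cross by metis
qed

lemma join_proj:
  fixes a b :: "'a::field vec3"
  assumes "cross3 a b \<noteq> (0,0,0)"
  shows "join (proj a) (proj b) = proj (cross3 a b)"
  unfolding join_def
proof (rule the_equality)
  show "proj (cross3 a b) \<in> pg_points \<and> incident (proj a) (proj (cross3 a b)) \<and> incident (proj b) (proj (cross3 a b))"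
    using assms by (simp add: proj_in_pg incident_proj dot_cross1 dot_cross2 dot3_comm[of a] dot3_comm[of b] del: dot3_simp)
next
  fix P assume "P \<in> pg_points \<and> incident (proj a) P \<and> incident (proj b) P"
  then have H: "incident (proj a) P" "incident (proj b) P" by auto
  from \<open>P \<in> pg_points \<and> _\<close> obtain x y z where P0: "(x,y,z) \<noteq> (0,0,0)" "P = proj (x,y,z)"
    by (blast elim: pgE)
  note P = P0 H[unfolded P0(2)]
  then have "dot3 a (x,y,z) = 0" "dot3 b (x,y,z) = 0" by (simp_all only: incident_proj)
  then have "dot3 (x,y,z) a = 0" "dot3 (x,y,z) b = 0" by (simp_all only: dot3_comm[of _ "(x,y,z)"])
  then show "P = proj (cross3 a b)" using P(1,2) assms perp_cross by metis
qed

lemma Pr_proj: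
  assumes "(a::'a::field, b) \<noteq> (0,0)"
  shows "Pr (proj (a,b,c)) = proj (a,b,0)"
proof -
  have "join ptT (proj (a,b,c)) = proj (-b, a, 0)"
    unfolding ptT_def using assms by (subst join_proj) auto
  moreover have "meet (proj (-b,a,0)) lineMT = proj (a,b,0)"
    unfolding lineMT_def using assms by (subst meet_proj) auto
  ultimately show ?thesis unfolding Pr_def by simp
qed



lemma fermat_field:
  fixes x :: "'a::{finite,field}"
  assumes "x \<noteq> 0"
  shows "x ^ (card (UNIV::'a set) - 1) = 1"
proof -
  define S where "S = (UNIV::'a set) - {0}"
  have fS: "finite S" by simp
  have cS: "card S = card (UNIV::'a set) - 1" unfolding S_def by (simp add: card_Diff_singleton)
  have bij: "bij_betw (\<lambda>y. x*y) S S"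
    unfolding bij_betw_def inj_on_def
  proof (intro conjI ballI impI)
    show "(*) x ` S = S"
    proof
      show "(*) x ` S \<subseteq> S" unfolding S_def using assms by auto
      show "S \<subseteq> (*) x ` S"
      proof
        fix y assume "y \<in> S"
        then have "y / x \<in> S" "y = x * (y / x)" unfolding S_def using assms by auto
        then show "y \<in> (*) x ` S" by blast
      qed
    qed
  qed (use assms in auto)
  have "prod (\<lambda>y. y) S = prod (\<lambda>y. x*y) S"
    using prod.reindex_bij_betw[OF bij, of "\<lambda>y. y"] by simp
  also have "\<dots> = x ^ card S * prod (\<lambda>y. y) S" by (simp add: prod.distrib)
  finally have "1 * prod (\<lambda>y. y) S = x ^ card S * prod (\<lambda>y. y) S" by simp
  moreover have "prod (\<lambda>y. y) S \<noteq> 0" using fS by (simp add: S_def)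
  ultimately show ?thesis using cS by (metis mult_right_cancel)
qed

lemma card_roots_one:
  assumes "1 \<le> n"
  shows "card {x::'a::field. x ^ n = 1} \<le> n"
proof -
  define p :: "'a poly" where "p = monom 1 n + [:-1:]"
  have dp: "degree p = n" unfolding p_def using assms
    by (subst degree_add_eq_left) (auto simp: degree_monom_eq)
  then have "p \<noteq> 0" using assms by auto
  have "{x::'a. x ^ n = 1} = {x. poly p x = 0}" unfolding p_def by (auto simp: poly_monom)
  then show ?thesis using card_poly_roots_bound[OF \<open>p \<noteq> 0\<close>] dp by simp
qed

definition nrm :: "nat \<Rightarrow> 'a::field \<Rightarrow> 'a" where
  "nrm q x = x * x ^ q * (x ^ q) ^ q"

lemma nrm_mult: "nrm q (x * y) = nrm q x * nrm q y"
  by (simp add: nrm_def power_mult_distrib algebra_simps)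

lemma nrm_pow: "nrm q x = x ^ (1 + q + q * q)"
  by (simp add: nrm_def power_add power_mult)

lemma nrm_zero_iff: "nrm q x = 0 \<longleftrightarrow> x = 0"
  by (auto simp add: nrm_def)

lemma nrm_one[simp]: "nrm q 1 = 1" by (simp add: nrm_def)

lemma nrm_inverse: "nrm q (inverse x) = inverse (nrm q x)"
  by (simp add: nrm_def power_inverse)

lemma nrm_divide: "nrm q (x / y) = nrm q x / nrm q y"
  by (simp add: divide_inverse nrm_mult nrm_inverse)

lemma nrm_neg: "nrm q (- x) = - nrm q x"
proof -
  have "nrm q (- x) = nrm q (-1) * nrm q x" using nrm_mult[of q "-1" x] by simp
  moreover have "nrm q (-1::'a) = -1"
  proof (cases "even q")
    case True then show ?thesis by (simp add: nrm_def)
  next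
    case False then show ?thesis by (simp add: nrm_def)
  qed
  ultimately show ?thesis by simp
qed

locale ffq =
  fixes q :: nat and ty :: "'a::{finite,field} itself"
  assumes card: "card (UNIV :: 'a set) = q ^ 3" and q2: "2 \<le> q"
begin

lemma frob3: "(((x::'a) ^ q) ^ q) ^ q = x"
proof (cases "x = 0")
  case True then show ?thesis using q2 by simp
next
  case False
  have "x ^ (q^3 - 1) = 1" using fermat_field[OF False] card by simp
  moreover have "q^3 = (q^3 - 1) + 1" using q2 by (simp add: Suc_leI)
  ultimately have "x ^ (q^3) = x" by (metis power_add power_one_right mult_1)
  then show ?thesis by (simp add: power_mult[symmetric] power3_eq_cube mult.assoc)
qed

lemma nrm_frob: "nrm q ((x::'a) ^ q) = nrm q x"
  unfolding nrm_def frob3 by (simp add: algebra_simps)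

lemma hilbert_easy:
  assumes "(x::'a) \<noteq> 0" "x = u * x ^ q"
  shows "nrm q u = 1"
proof -
  have "nrm q x = nrm q u * nrm q x" using assms(2) nrm_mult nrm_frob by metis
  moreover have "nrm q x \<noteq> 0" using assms(1) nrm_zero_iff by metis
  ultimately show ?thesis by simp
qed

lemma hilbert_hard:
  assumes "nrm q (u::'a) = 1"
  shows "\<exists>x. x \<noteq> 0 \<and> x = u * x ^ q"
proof -
  define S where "S = (UNIV::'a set) - {0}"
  define f where "f = (\<lambda>x::'a. x / x ^ q)"
  define A where "A = f ` S"
  define B where "B = {u::'a. u ^ (1 + q + q*q) = 1}"
  have AB: "A \<subseteq> B"
  proof
    fix y assume "y \<in> A"
    then obtain x where x: "x \<noteq> 0" "y = x / x ^ q" unfolding A_def S_def f_def by auto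
    have "nrm q y = 1" using x by (simp add: nrm_divide nrm_frob nrm_zero_iff)
    then show "y \<in> B" unfolding B_def by (simp add: nrm_pow)
  qed
  have cB: "card B \<le> 1 + q + q*q" unfolding B_def by (rule card_roots_one) simp
  have fib: "card {x \<in> S. f x = y} \<le> q - 1" if "y \<in> A" for y
  proof -
    obtain x0 where x0: "x0 \<in> S" "f x0 = y" using \<open>y \<in> A\<close> unfolding A_def by auto
    have "{x \<in> S. f x = y} \<subseteq> (\<lambda>z. z * x0) ` {z. z ^ (q - 1) = 1}"
    proof
      fix x assume "x \<in> {x \<in> S. f x = y}"
      then have x: "x \<noteq> 0" "x / x ^ q = x0 / x0 ^ q" and x00: "x0 \<noteq> 0"
        using x0 unfolding S_def f_def by auto
      define z where "z = x / x0"
      have "z ^ q = z" using x x00 unfolding z_def by (simp add: power_divide field_simps)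
      moreover have "z \<noteq> 0" using x x00 unfolding z_def by simp
      moreover have "q = (q - 1) + 1" using q2 by simp
      ultimately have "z ^ (q - 1) = 1" by (metis power_add power_one_right mult_cancel_right2)
      moreover have "x = z * x0" using x00 unfolding z_def by simp
      ultimately show "x \<in> (\<lambda>z. z * x0) ` {z. z ^ (q - 1) = 1}" by blast
    qed
    then have "card {x \<in> S. f x = y} \<le> card ((\<lambda>z. z * x0) ` {z::'a. z ^ (q - 1) = 1})"
      by (intro card_mono) auto
    also have "\<dots> \<le> card {z::'a. z ^ (q - 1) = 1}" by (rule card_image_le) simp
    also have "\<dots> \<le> q - 1" using q2 by (intro card_roots_one) simp
    finally show ?thesis .
  qed
  have "S = (\<Union>y\<in>A. {x \<in> S. f x = y})" unfolding A_def by auto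
  then have "card S \<le> (\<Sum>y\<in>A. card {x \<in> S. f x = y})"
    by (metis card_UN_le finite)
  also have "\<dots> \<le> card A * (q - 1)" using fib sum_bounded_above[of A "\<lambda>y. card {x \<in> S. f x = y}" "q - 1"] by simp
  finally have c1: "card S \<le> card A * (q - 1)" .
  have cS: "card S = q^3 - 1" unfolding S_def using card by (simp add: card_Diff_singleton)
  obtain r where r: "q = r + 2" using q2 by (metis le_add_diff_inverse add.commute)
  have "q^3 - 1 = (q - 1) * (1 + q + q*q)" unfolding r by (simp add: algebra_simps power3_eq_cube)
  then have le: "(q - 1) * (1 + q + q*q) \<le> (q - 1) * card A" using c1 cS by (simp only: mult.commute)
  have "1 + q + q*q \<le> card A" using le q2 mult_le_cancel1[of "q - 1" "1 + q + q*q" "card A"] by linarith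
  then have "card A = card B" using cB card_mono[OF _ AB] by simp
  then have "A = B" using AB by (intro card_subset_eq) auto
  moreover have "u \<in> B" using assms unfolding B_def by (simp add: nrm_pow)
  ultimately obtain x where "x \<in> S" "u = x / x ^ q" unfolding A_def f_def by auto
  then show ?thesis unfolding S_def by (intro exI[of _ x]) auto
qed

lemma phi_proj: "phi q (proj v) = proj (phiv q (v::'a vec3))"
proof -
  obtain x y z where v: "v = (x,y,z)" by (cases v) auto
  show ?thesis
  proof (rule set_eqI, rule iffI)
    fix p assume "p \<in> phi q (proj v)"
    then obtain c where "c \<noteq> 0" "p = phiv q (smult3 c v)" unfolding phi_def proj_def by auto
    then show "p \<in> proj (phiv q v)" unfolding proj_def v
      by (intro CollectI exI[of _ "c^q"]) (auto simp: power_mult_distrib)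
  next
    fix p assume "p \<in> proj (phiv q v)"
    then obtain d where d: "d \<noteq> 0" "p = smult3 d (phiv q v)" unfolding proj_def by auto
    define c where "c = (d ^ q) ^ q"
    have "c ^ q = d" unfolding c_def by (rule frob3)
    moreover have "c \<noteq> 0" using d unfolding c_def by simp
    ultimately have "p = phiv q (smult3 c v)" "smult3 c v \<in> proj v" using d unfolding v proj_def
      by (auto simp: power_mult_distrib)
    then show "p \<in> phi q (proj v)" unfolding phi_def by blast
  qed
qed

end


lemma dot3_smult: "dot3 (smult3 k v) w = k * dot3 v (w::'a::field vec3)"
  by (cases v; cases w) (auto simp: algebra_simps)

context ffq begin

lemma zpow[simp]: "(0::'a) ^ q = 0" using q2 by simp

lemma phiT: "phi q ptT = (proj (1,0,0) :: 'a vec3 set)"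
  unfolding ptT_def by (simp add: phi_proj)
lemma phiphiT: "phi q (phi q ptT) = (proj (0,1,0) :: 'a vec3 set)"
  unfolding phiT by (simp add: phi_proj)

lemma lineMT_pts:
  assumes "P \<in> points_on lineMT"
  shows "\<exists>a b::'a. (a,b) \<noteq> (0,0) \<and> P = proj (a,b,0)"
proof -
  have P: "P \<in> pg_points" "incident P lineMT" using assms unfolding points_on_def by auto
  from P(1) obtain x y z where xyz: "(x,y,z) \<noteq> ((0::'a),0,0)" "P = proj (x,y,z)" by (rule pgE)
  have "z = 0" using P(2) unfolding xyz(2) lineMT_def incident_proj by simp
  then show ?thesis using xyz by blast
qed

lemma lineMT_ptsI: "(a::'a,b) \<noteq> (0,0) \<Longrightarrow> proj (a,b,0) \<in> points_on lineMT"
  unfolding points_on_def lineMT_def by (auto simp: incident_proj intro!: proj_in_pg)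

lemma pg_not_T:
  assumes "P \<in> pg_points" "P \<noteq> (ptT :: 'a vec3 set)"
  obtains a b c where "(a,b) \<noteq> (0,0)" "P = proj (a,b,c)"
proof -
  from assms(1) obtain a b c where abc: "(a,b,c) \<noteq> ((0::'a),0,0)" "P = proj (a,b,c)" by (rule pgE)
  have "(a,b) \<noteq> (0,0)"
  proof
    assume "(a,b) = (0,0)"
    then have "P = proj (0,0,1)" unfolding abc(2) using abc by (intro proj_eqI[of c]) auto
    then show False using assms(2) unfolding ptT_def by simp
  qed
  then show thesis using abc that by blast
qed

lemma T_ne: "(a,b) \<noteq> (0,0) \<Longrightarrow> proj (a,b,c) \<noteq> (ptT :: 'a vec3 set)"
  unfolding ptT_def by (auto simp: proj_eq_iff)

lemma target1:
  "points_on lineMT - (S1 q \<union> {proj (1,0,0)}) = {proj (u,1,0) | u::'a. nrm q u \<noteq> 1}"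
proof (rule set_eqI, rule iffI)
  fix P :: "'a vec3 set" assume P: "P \<in> points_on lineMT - (S1 q \<union> {proj (1,0,0)})"
  then obtain a b :: 'a where ab: "(a,b) \<noteq> (0,0)" "P = proj (a,b,0)" using lineMT_pts by blast
  have "b \<noteq> 0"
  proof
    assume "b = 0"
    then have "P = proj (1,0,0)" unfolding ab(2) using ab by (intro proj_eqI[of a]) auto
    then show False using P by simp
  qed
  define u where "u = a / b"
  have Pu: "P = proj (u,1,0)" unfolding ab u_def using \<open>b\<noteq>0\<close> by (intro proj_eqI[of b]) auto
  have "nrm q u \<noteq> 1"
  proof
    assume "nrm q u = 1"
    then obtain x where x: "x \<noteq> 0" "x = u * x ^ q" using hilbert_hard by blast
    then have "proj (x, x^q, 0) = P" unfolding Pu by (intro proj_eqI[of "x^q"]) (auto simp: field_simps)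
    then have "P \<in> S1 q" unfolding S1_def using x by blast
    then show False using P by simp
  qed
  then show "P \<in> {proj (u,1,0) | u::'a. nrm q u \<noteq> 1}" using Pu by blast
next
  fix P :: "'a vec3 set" assume "P \<in> {proj (u,1,0) | u::'a. nrm q u \<noteq> 1}"
  then obtain u where u: "P = proj (u,1,0)" "nrm q u \<noteq> 1" by blast
  have "P \<notin> S1 q"
  proof
    assume "P \<in> S1 q"
    then obtain x where x: "x \<noteq> 0" "proj (x, x^q, 0) = proj (u,1,0)" unfolding S1_def u by auto
    then obtain k where k: "k \<noteq> 0" "(u,1,0) = smult3 k (x, x^q, 0)" using proj_eqD by blast
    then have "x = u * x ^ q" by auto
    then show False using hilbert_easy x u by blast
  qed
  moreover have "P \<noteq> proj (1,0,0)" unfolding u by (auto simp: proj_eq_iff)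
  ultimately show "P \<in> points_on lineMT - (S1 q \<union> {proj (1,0,0)})"
    using lineMT_ptsI[of u 1] u by auto
qed

lemma target2:
  "points_on lineMT - (S1 q \<union> {proj (0,1,0)}) = {proj (1,v,0) | v::'a. nrm q v \<noteq> 1}"
proof (rule set_eqI, rule iffI)
  fix P :: "'a vec3 set" assume P: "P \<in> points_on lineMT - (S1 q \<union> {proj (0,1,0)})"
  then obtain a b :: 'a where ab: "(a,b) \<noteq> (0,0)" "P = proj (a,b,0)" using lineMT_pts by blast
  have "a \<noteq> 0"
  proof
    assume "a = 0"
    then have "P = proj (0,1,0)" unfolding ab(2) using ab by (intro proj_eqI[of b]) auto
    then show False using P by simp
  qed
  define v where "v = b / a"
  have Pv: "P = proj (1,v,0)" unfolding ab v_def using \<open>a\<noteq>0\<close> by (intro proj_eqI[of a]) auto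
  have "nrm q v \<noteq> 1"
  proof
    assume "nrm q v = 1"
    then have "nrm q (inverse v) = 1" by (simp add: nrm_inverse)
    then obtain x where x: "x \<noteq> 0" "x = inverse v * x ^ q" using hilbert_hard by blast
    then have "v \<noteq> 0" by auto
    then have "x ^ q = v * x" using x by (metis mult.assoc right_inverse mult_1)
    then have "proj (x, x^q, 0) = P" unfolding Pv using x by (intro proj_eqI[of "x"]) (auto simp: field_simps)
    then have "P \<in> S1 q" unfolding S1_def using x by blast
    then show False using P by simp
  qed
  then show "P \<in> {proj (1,v,0) | v::'a. nrm q v \<noteq> 1}" using Pv by blast
next
  fix P :: "'a vec3 set" assume "P \<in> {proj (1,v,0) | v::'a. nrm q v \<noteq> 1}"
  then obtain v where v: "P = proj (1,v,0)" "nrm q v \<noteq> 1" by blast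
  have "P \<notin> S1 q"
  proof
    assume "P \<in> S1 q"
    then obtain x where x: "x \<noteq> 0" "proj (x, x^q, 0) = proj (1,v,0)" unfolding S1_def v by auto
    then obtain k where k: "k \<noteq> 0" "(1,v,0) = smult3 k (x, x^q, 0)" using proj_eqD by blast
    then have kx: "k * x = 1" "v = k * x ^ q" by auto
    then have "x = inverse v * x ^ q" using x k(1) by (auto simp: field_simps)
    then have "nrm q (inverse v) = 1" using hilbert_easy x by blast
    then have "nrm q v = 1" by (simp add: nrm_inverse)
    then show False using v by simp
  qed
  moreover have "P \<noteq> proj (0,1,0)" unfolding v by (auto simp: proj_eq_iff)
  ultimately show "P \<in> points_on lineMT - (S1 q \<union> {proj (0,1,0)})"
    using lineMT_ptsI[of 1 v] v by auto
qed

end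


lemma conc_iff:
  fixes l m n :: "'a::field vec3"
  assumes "cross3 m n \<noteq> (0,0,0)"
  shows "concurrent3 (proj l) (proj m) (proj n) \<longleftrightarrow> dot3 (cross3 m n) l = 0"
proof
  assume "concurrent3 (proj l) (proj m) (proj n)"
  then obtain P where P: "P \<in> pg_points" "incident P (proj l)" "incident P (proj m)" "incident P (proj n)"
    unfolding concurrent3_def by blast
  from P(1) obtain x y z where xyz: "(x,y,z) \<noteq> ((0::'a),0,0)" "P = proj (x,y,z)" by (rule pgE)
  have d: "dot3 (x,y,z) l = 0" "dot3 (x,y,z) m = 0" "dot3 (x,y,z) n = 0"
    using P(2-4) unfolding xyz(2) incident_proj by auto
  have "proj (x,y,z) = proj (cross3 m n)" using perp_cross[OF xyz(1) d(2,3) assms] .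
  then obtain k where "cross3 m n = smult3 k (x,y,z)" using proj_eqD by blast
  then show "dot3 (cross3 m n) l = 0" using d(1) by (simp only: dot3_smult) simp
next
  assume "dot3 (cross3 m n) l = 0"
  then show "concurrent3 (proj l) (proj m) (proj n)" unfolding concurrent3_def using assms
    by (intro bexI[of _ "proj (cross3 m n)"]) (auto simp: incident_proj dot_cross1 dot_cross2 intro: proj_in_pg simp del: dot3_simp cross3_simp)
qed

context ffq begin

lemma phi1: "phi q (proj (0,1,d)) = proj (d^q, 0, 1::'a)" by (simp add: phi_proj)
lemma phiphi1: "phi q (phi q (proj (0,1,d))) = proj (1, (d^q)^q, 0::'a)" by (simp add: phi_proj)
lemma phi2: "phi q (proj (1,0,d)) = proj (d^q, 1, 0::'a)" by (simp add: phi_proj)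
lemma phiphi2: "phi q (phi q (proj (1,0,d))) = proj (0, (d^q)^q, 1::'a)" by (simp add: phi_proj)

lemma meet1: "meet (phi q (proj (0,1,d))) (phi q (phi q (proj (0,1,d)))) = proj (-((d^q)^q), 1, d^q*(d^q)^q::'a)"
  by (simp add: phi_proj, subst meet_proj, auto)
lemma meet2: "meet (phi q (proj (1,0,d))) (phi q (phi q (proj (1,0,d)))) = proj (1, -(d^q), d^q*(d^q)^q::'a)"
  by (simp add: phi_proj, subst meet_proj, auto)

lemma type1: "typeIII_line q (proj (0,1,d::'a)) \<longleftrightarrow> 1 + nrm q d \<noteq> 0"
proof -
  have "concurrent3 (proj (0,1,d)) (proj (d^q, 0, 1)) (proj (1, (d^q)^q, 0)) \<longleftrightarrow> 1 + nrm q d = 0"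
    by (subst conc_iff) (auto simp: nrm_def algebra_simps)
  then show ?thesis unfolding typeIII_line_def phiphi1 phi1
    by (auto simp: proj_eq_iff phi_proj intro!: proj_in_pg)
qed

lemma type2: "typeIII_line q (proj (1,0,d::'a)) \<longleftrightarrow> 1 + nrm q d \<noteq> 0"
proof -
  have "concurrent3 (proj (1,0,d)) (proj (d^q, 1, 0)) (proj (0, (d^q)^q, 1)) \<longleftrightarrow> 1 + nrm q d = 0"
    by (subst conc_iff) (auto simp: nrm_def algebra_simps)
  then show ?thesis unfolding typeIII_line_def phiphi2 phi2
    by (auto simp: proj_eq_iff phi_proj intro!: proj_in_pg)
qed

lemma metaT: "meet (phi q (proj (0,0,1))) (phi q (phi q (proj (0,0,1)))) = (ptT::'a vec3 set)"
  unfolding ptT_def by (simp add: phi_proj meet_proj)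

end


context ffq begin

lemma nrm_ff: "nrm q ((d^q)^q) = nrm q (d::'a)" by (simp add: nrm_frob)

lemma part1: "Pr ` (Fig q (proj (1,0,0)) - {ptT}) = {proj (u,1,0) | u::'a. nrm q u \<noteq> 1}"
proof (rule set_eqI, rule iffI)
  fix Q :: "'a vec3 set" assume "Q \<in> Pr ` (Fig q (proj (1,0,0)) - {ptT})"
  then obtain P where P: "P \<in> Fig q (proj (1,0,0))" "P \<noteq> ptT" "Q = Pr P" by blast
  show "Q \<in> {proj (u,1,0) | u::'a. nrm q u \<noteq> 1}"
  proof (cases "P \<in> figE q (proj (1,0,0))")
    case True
    then have Ppg: "P \<in> pg_points" and inc: "incident P (join (phi q (proj (1,0,0))) (phi q (phi q (proj (1,0,0)))))"
      unfolding figE_def typeII_def by auto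
    have "join (phi q (proj (1,0,0))) (phi q (phi q (proj (1,0,0)))) = proj (1,0,0::'a)"
      by (simp add: phi_proj, subst join_proj, auto)
    then have inc': "incident P (proj (1,0,0))" using inc by simp
    obtain a b c where abc: "(a,b) \<noteq> (0,0)" "P = proj (a,b,c)" using pg_not_T[OF Ppg P(2)] by blast
    have "a = 0" using inc' unfolding abc(2) incident_proj by simp
    then have "b \<noteq> 0" using abc by auto
    have "Q = proj (a,b,0)" using P(3) abc Pr_proj by metis
    also have "\<dots> = proj (0,1,0)" using \<open>a = 0\<close> \<open>b\<noteq>0\<close> by (intro proj_eqI[of b]) auto
    finally have "Q = proj (0,1,0)" .
    moreover have "nrm q (0::'a) \<noteq> 1" by (simp add: nrm_def)
    ultimately show ?thesis by blast
  next
    case False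
    then have "P \<in> figF q (proj (1,0,0))" using P(1) unfolding Fig_def by auto
    then obtain l where l: "P = meet (phi q l) (phi q (phi q l))" "typeIII_line q l" "incident (proj (1,0,0)) l"
      unfolding figF_def by blast
    have "l \<in> pg_points" using l(2) unfolding typeIII_line_def by auto
    then obtain a b c where abc: "(a,b,c) \<noteq> ((0::'a),0,0)" "l = proj (a,b,c)" by (rule pgE)
    have "a = 0" using l(3) unfolding abc(2) incident_proj by simp
    show ?thesis
    proof (cases "b = 0")
      case True
      then have "c \<noteq> 0" using abc \<open>a=0\<close> by auto
      have "l = proj (0,0,1)" unfolding abc(2) using \<open>a=0\<close> True \<open>c\<noteq>0\<close> by (intro proj_eqI[of c]) auto
      then have "P = ptT" using l(1) metaT by simp
      then show ?thesis using P(2) by simp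
    next
      case False
      define d where "d = c / b"
      have ld: "l = proj (0,1,d)" unfolding abc(2) d_def using \<open>a=0\<close> False by (intro proj_eqI[of b]) auto
      have nd: "1 + nrm q d \<noteq> 0" using l(2) unfolding ld type1 .
      have "P = proj (-((d^q)^q), 1, d^q*(d^q)^q)" using l(1) unfolding ld meet1 .
      then have "Q = proj (-((d^q)^q), 1, 0)" using P(3) by (simp add: Pr_proj)
      moreover have "nrm q (-((d^q)^q)) \<noteq> 1" using nd by (simp add: nrm_neg nrm_ff) (metis add.commute add_eq_0_iff2 minus_equation_iff)
      ultimately show ?thesis by blast
    qed
  qed
next
  fix Q :: "'a vec3 set" assume "Q \<in> {proj (u,1,0) | u::'a. nrm q u \<noteq> 1}"
  then obtain u where u: "Q = proj (u,1,0)" "nrm q u \<noteq> 1" by blast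
  define d where "d = (-u)^q"
  have dd: "-((d^q)^q) = u" unfolding d_def by (simp add: frob3)
  have nd: "1 + nrm q d \<noteq> 0" unfolding d_def using u(2) by (simp add: nrm_frob nrm_neg)
  define P where "P = meet (phi q (proj (0,1,d))) (phi q (phi q (proj (0,1,d))))"
  have PF: "P \<in> figF q (proj (1,0,0))" unfolding figF_def P_def
    using nd by (auto simp: type1 incident_proj)
  have Pe: "P = proj (u, 1, d^q*(d^q)^q)" unfolding P_def meet1 dd ..
  then have "P \<noteq> ptT" using T_ne by simp
  moreover have "Pr P = Q" unfolding Pe u(1) by (simp add: Pr_proj)
  ultimately show "Q \<in> Pr ` (Fig q (proj (1,0,0)) - {ptT})" using PF unfolding Fig_def by blast
qed

lemma part2: "Pr ` (Fig q (proj (0,1,0)) - {ptT}) = {proj (1,v,0) | v::'a. nrm q v \<noteq> 1}"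
proof (rule set_eqI, rule iffI)
  fix Q :: "'a vec3 set" assume "Q \<in> Pr ` (Fig q (proj (0,1,0)) - {ptT})"
  then obtain P where P: "P \<in> Fig q (proj (0,1,0))" "P \<noteq> ptT" "Q = Pr P" by blast
  show "Q \<in> {proj (1,v,0) | v::'a. nrm q v \<noteq> 1}"
  proof (cases "P \<in> figE q (proj (0,1,0))")
    case True
    then have Ppg: "P \<in> pg_points" and inc: "incident P (join (phi q (proj (0,1,0))) (phi q (phi q (proj (0,1,0)))))"
      unfolding figE_def typeII_def by auto
    have "join (phi q (proj (0,1,0))) (phi q (phi q (proj (0,1,0)))) = proj (0,1,0::'a)"
      by (simp add: phi_proj, subst join_proj, auto)
    then have inc': "incident P (proj (0,1,0))" using inc by simp
    obtain a b c where abc: "(a,b) \<noteq> (0,0)" "P = proj (a,b,c)" using pg_not_T[OF Ppg P(2)] by blast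
    have "b = 0" using inc' unfolding abc(2) incident_proj by simp
    then have "a \<noteq> 0" using abc by auto
    have "Q = proj (a,b,0)" using P(3) abc Pr_proj by metis
    also have "\<dots> = proj (1,0,0)" using \<open>b = 0\<close> \<open>a\<noteq>0\<close> by (intro proj_eqI[of a]) auto
    finally have "Q = proj (1,0,0)" .
    moreover have "nrm q (0::'a) \<noteq> 1" by (simp add: nrm_def)
    ultimately show ?thesis by blast
  next
    case False
    then have "P \<in> figF q (proj (0,1,0))" using P(1) unfolding Fig_def by auto
    then obtain l where l: "P = meet (phi q l) (phi q (phi q l))" "typeIII_line q l" "incident (proj (0,1,0)) l"
      unfolding figF_def by blast
    have "l \<in> pg_points" using l(2) unfolding typeIII_line_def by auto
    then obtain a b c where abc: "(a,b,c) \<noteq> ((0::'a),0,0)" "l = proj (a,b,c)" by (rule pgE)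
    have "b = 0" using l(3) unfolding abc(2) incident_proj by simp
    show ?thesis
    proof (cases "a = 0")
      case True
      then have "c \<noteq> 0" using abc \<open>b=0\<close> by auto
      have "l = proj (0,0,1)" unfolding abc(2) using \<open>b=0\<close> True \<open>c\<noteq>0\<close> by (intro proj_eqI[of c]) auto
      then have "P = ptT" using l(1) metaT by simp
      then show ?thesis using P(2) by simp
    next
      case False
      define d where "d = c / a"
      have ld: "l = proj (1,0,d)" unfolding abc(2) d_def using \<open>b=0\<close> False by (intro proj_eqI[of a]) auto
      have nd: "1 + nrm q d \<noteq> 0" using l(2) unfolding ld type2 .
      have "P = proj (1, -(d^q), d^q*(d^q)^q)" using l(1) unfolding ld meet2 .
      then have "Q = proj (1, -(d^q), 0)" using P(3) by (simp add: Pr_proj)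
      moreover have "nrm q (-(d^q)) \<noteq> 1" using nd by (simp add: nrm_neg nrm_frob) (metis add.commute add_eq_0_iff2 minus_equation_iff)
      ultimately show ?thesis by blast
    qed
  qed
next
  fix Q :: "'a vec3 set" assume "Q \<in> {proj (1,v,0) | v::'a. nrm q v \<noteq> 1}"
  then obtain v where v: "Q = proj (1,v,0)" "nrm q v \<noteq> 1" by blast
  define d where "d = ((-v)^q)^q"
  have dd: "-(d^q) = v" unfolding d_def by (simp add: frob3)
  have nd: "1 + nrm q d \<noteq> 0" unfolding d_def using v(2) by (simp add: nrm_frob nrm_neg)
  define P where "P = meet (phi q (proj (1,0,d))) (phi q (phi q (proj (1,0,d))))"
  have PF: "P \<in> figF q (proj (0,1,0))" unfolding figF_def P_def
    using nd by (auto simp: type2 incident_proj)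
  have Pe: "P = proj (1, v, d^q*(d^q)^q)" unfolding P_def meet2 dd ..
  then have "P \<noteq> ptT" using T_ne by simp
  moreover have "Pr P = Q" unfolding Pe v(1) by (simp add: Pr_proj)
  ultimately show "Q \<in> Pr ` (Fig q (proj (0,1,0)) - {ptT})" using PF unfolding Fig_def by blast
qed

end

theorem theorem6p3:
  fixes q :: nat and T :: "'a::{finite, field} vec3 set"
  defines "T \<equiv> ptT"
  assumes "primepow q"
    and "card (UNIV :: 'a set) = q ^ 3"
  shows "Pr ` (Fig q (phi q T) - {T})
           = points_on lineMT - (S1 q \<union> {phi q T})
     \<and> Pr ` (Fig q (phi q (phi q T)) - {T})
           = points_on lineMT - (S1 q \<union> {phi q (phi q T)})"
proof -
  have "2 \<le> q" using assms(2) primepow_gt_Suc_0 by fastforce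
  then interpret ffq q "TYPE('a)" using assms(3) by unfold_locales
  show ?thesis unfolding T_def phiphiT unfolding phiT target1 target2 part1 part2 by simp
qed

end
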